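(* Let $(X,d)$ and $(Y,d')$ be complete metric spaces, and let $\mathcal{F}=\{X; f_{\lambda}\mid\lambda\in\Lambda\}$ and $\mathcal{G}=\{Y; g_{\gamma}\mid\gamma\in\Gamma\}$ be parameterized iterated function systems. Equip $X\times Y$ with the metric $D((x_1,y_1),(x_2,y_2))=\max\{d(x_1,x_2),d'(y_1,y_2)\}$ and let $\mathcal{F}\times\mathcal{G}=\{X\times Y; f_\lambda\times g_\gamma\mid \lambda\in\Lambda,\gamma\in\Gamma\}$, where $(f_\lambda\times g_\gamma)(x,y)=(f_\lambda(x),g_\gamma(y))$. Then $\mathcal{F}\times\mathcal{G}$ has the average shadowing property if and only if both $\mathcal{F}$ and $\mathcal{G}$ have the average shadowing property.
   Context: A parameterized iterated function system (IFS) $\mathcal{H}=\{Z; h_{\mu}\mid\mu\in M\}$ on a metric space $(Z,\rho)$ is a family of continuous maps $h_\mu:Z\to Z$ indexed by a finite nonempty set $M$. For $\sigma=(\mu_0,\mu_1,\dots)\in M^{\mathbb{Z}_+}$ write $\mathcal{H}_{\sigma_n}=h_{\mu_{n-1}}\circ\cdots\circ h_{\mu_0}$ for $n\ge1$ and $\mathcal{H}_{\sigma_0}=\mathrm{id}_Z$. For $\delta>0$, a sequence $(z_i)_{i\ge0}$ in $Z$ is a $\delta$-average pseudo-orbit of $\mathcal{H}$ if there exist a natural number $N$ and $\sigma=(\mu_0,\mu_1,\dots)\in M^{\mathbb{Z}_+}$ such that for all $n\ge N$, $\frac1n\sum_{i=0}^{n-1}\rho(h_{\mu_i}(z_i),z_{i+1})<\delta$.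 A sequence $(z_i)_{i\ge0}$ is $\epsilon$-shadowed in average by $w\in Z$ if there exists $\sigma\in M^{\mathbb{Z}_+}$ with $\limsup_{n\to\infty}\frac1n\sum_{i=0}^{n-1}\rho(\mathcal{H}_{\sigma_i}(w),z_i)<\epsilon$. $\mathcal{H}$ has the average shadowing property if for every $\epsilon>0$ there is $\delta>0$ such that every $\delta$-average pseudo-orbit of $\mathcal{H}$ is $\epsilon$-shadowed in average by some point of $Z$. *)

theory Defs
  imports "HOL-Analysis.Analysis"
begin

text \<open>Sequences in M^{Z_+} are
functions sigma :: nat => 'm with all values in M.\<close>

fun ifs_comp :: "('m \<Rightarrow> 'z \<Rightarrow> 'z) \<Rightarrow> (nat \<Rightarrow> 'm) \<Rightarrow> nat \<Rightarrow> 'z \<Rightarrow> 'z" where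
  "ifs_comp h \<sigma> 0 = id"
| "ifs_comp h \<sigma> (Suc n) = h (\<sigma> n) \<circ> ifs_comp h \<sigma> n"

definition avg_pseudo_orbit ::
  "('z \<Rightarrow> 'z \<Rightarrow> real) \<Rightarrow> 'm set \<Rightarrow> ('m \<Rightarrow> 'z \<Rightarrow> 'z) \<Rightarrow> real \<Rightarrow> (nat \<Rightarrow> 'z) \<Rightarrow> bool" where
  "avg_pseudo_orbit \<rho> M h \<delta> z \<longleftrightarrow>
     (\<exists>N::nat. \<exists>\<sigma>. (\<forall>i. \<sigma> i \<in> M) \<and>
        (\<forall>n\<ge>N. (1 / real n) * (\<Sum>i<n. \<rho> (h (\<sigma> i) (z i)) (z (Suc i))) < \<delta>))"

definition avg_shadowed ::
  "('z \<Rightarrow> 'z \<Rightarrow> real) \<Rightarrow> 'm set \<Rightarrow> ('m \<Rightarrow> 'z \<Rightarrow> 'z) \<Rightarrow> real \<Rightarrow> (nat \<Rightarrow> 'z) \<Rightarrow> 'z \<Rightarrow> bool" where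
  "avg_shadowed \<rho> M h \<epsilon> z w \<longleftrightarrow>
     (\<exists>\<sigma>. (\<forall>i. \<sigma> i \<in> M) \<and>
        limsup (\<lambda>n. ereal ((1 / real n) * (\<Sum>i<n. \<rho> (ifs_comp h \<sigma> i w) (z i)))) < ereal \<epsilon>)"

definition average_shadowing ::
  "('z \<Rightarrow> 'z \<Rightarrow> real) \<Rightarrow> 'm set \<Rightarrow> ('m \<Rightarrow> 'z \<Rightarrow> 'z) \<Rightarrow> bool" where
  "average_shadowing \<rho> M h \<longleftrightarrow>
     (\<forall>\<epsilon>>0. \<exists>\<delta>>0. \<forall>z. avg_pseudo_orbit \<rho> M h \<delta> z \<longrightarrow> (\<exists>w. avg_shadowed \<rho> M h \<epsilon> z w))"

definition max_dist :: "('a::metric_space \<times> 'b::metric_space) \<Rightarrow> ('a \<times> 'b) \<Rightarrow> real" where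
  "max_dist p q = max (dist (fst p) (fst q)) (dist (snd p) (snd q))"

definition prod_ifs :: "('l \<Rightarrow> 'a \<Rightarrow> 'a) \<Rightarrow> ('g \<Rightarrow> 'b \<Rightarrow> 'b) \<Rightarrow> ('l \<times> 'g) \<Rightarrow> ('a \<times> 'b) \<Rightarrow> ('a \<times> 'b)" where
  "prod_ifs f g lg xy = (f (fst lg) (fst xy), g (snd lg) (snd xy))"

end

theory Submission
  imports Defs
begin

lemma ifs_comp_prod:
  "ifs_comp (prod_ifs f g) \<sigma> i (a, b) =
     (ifs_comp f (fst \<circ> \<sigma>) i a, ifs_comp g (snd \<circ> \<sigma>) i b)"
  by (induction i) (auto simp: prod_ifs_def)

lemma ereal_lt_add: "(a::ereal) < ereal x \<Longrightarrow> b < ereal y \<Longrightarrow> a + b < ereal (x + y)"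
  by (cases a; cases b) auto

lemma avg_le:
  assumes "\<And>i. (u i::real) \<le> v i"
  shows "(1 / real n) * (\<Sum>i<n. u i) \<le> (1 / real n) * (\<Sum>i<n. v i)"
  using assms by (intro mult_left_mono sum_mono) auto

lemma limsup_le_avg:
  assumes "\<And>i. (u i::real) \<le> v i"
  shows "limsup (\<lambda>n. ereal ((1 / real n) * (\<Sum>i<n. u i)))
       \<le> limsup (\<lambda>n. ereal ((1 / real n) * (\<Sum>i<n. v i)))"
  by (rule Limsup_mono) (use avg_le[OF assms] in auto)

lemma max_dist_fst: "dist (fst p) (fst q) \<le> max_dist p q"
  and max_dist_snd: "dist (snd p) (snd q) \<le> max_dist p q"
  by (auto simp: max_dist_def)

lemma max_dist_le_sum: "max_dist p q \<le> dist (fst p) (fst q) + dist (snd p) (snd q)"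
  by (auto simp: max_dist_def)

theorem mainTheorem4:
  fixes f :: "'l \<Rightarrow> 'a::{metric_space,complete_space} \<Rightarrow> 'a"
    and g :: "'g \<Rightarrow> 'b::{metric_space,complete_space} \<Rightarrow> 'b"
    and \<Lambda> :: "'l set" and \<Gamma> :: "'g set"
  assumes "finite \<Lambda>" "\<Lambda> \<noteq> {}" "\<And>l. l \<in> \<Lambda> \<Longrightarrow> continuous_on UNIV (f l)"
    and "finite \<Gamma>" "\<Gamma> \<noteq> {}" "\<And>c. c \<in> \<Gamma> \<Longrightarrow> continuous_on UNIV (g c)"
  shows "average_shadowing max_dist (\<Lambda> \<times> \<Gamma>) (prod_ifs f g) \<longleftrightarrow>
           (average_shadowing dist \<Lambda> f \<and> average_shadowing dist \<Gamma> g)"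
proof
  assume P: "average_shadowing max_dist (\<Lambda> \<times> \<Gamma>) (prod_ifs f g)"
  obtain l0 where l0: "l0 \<in> \<Lambda>" using assms(2) by blast
  obtain c0 where c0: "c0 \<in> \<Gamma>" using assms(5) by blast
  show "average_shadowing dist \<Lambda> f \<and> average_shadowing dist \<Gamma> g"
  proof
    show "average_shadowing dist \<Lambda> f"
      unfolding average_shadowing_def
    proof (intro allI impI)
      fix \<epsilon> :: real assume "\<epsilon> > 0"
      then obtain \<delta> where d: "\<delta> > 0" and H: "\<And>z. avg_pseudo_orbit max_dist (\<Lambda> \<times> \<Gamma>) (prod_ifs f g) \<delta> z
          \<Longrightarrow> \<exists>w. avg_shadowed max_dist (\<Lambda> \<times> \<Gamma>) (prod_ifs f g) \<epsilon> z w"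
        using P unfolding average_shadowing_def by blast
      show "\<exists>\<delta>>0. \<forall>z. avg_pseudo_orbit dist \<Lambda> f \<delta> z \<longrightarrow> (\<exists>w. avg_shadowed dist \<Lambda> f \<epsilon> z w)"
      proof (intro exI[of _ \<delta>] conjI allI impI d)
        fix x assume "avg_pseudo_orbit dist \<Lambda> f \<delta> x"
        then obtain N \<sigma> where s: "\<forall>i. \<sigma> i \<in> \<Lambda>"
          and ps: "\<forall>n\<ge>N. (1 / real n) * (\<Sum>i<n. dist (f (\<sigma> i) (x i)) (x (Suc i))) < \<delta>"
          unfolding avg_pseudo_orbit_def by blast
        define y where "y i = ifs_comp g (\<lambda>_. c0) i undefined" for i
        define z where "z i = (x i, y i)" for i
        have yS: "g c0 (y i) = y (Suc i)" for i by (simp add: y_def)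
        have "avg_pseudo_orbit max_dist (\<Lambda> \<times> \<Gamma>) (prod_ifs f g) \<delta> z"
          unfolding avg_pseudo_orbit_def
          apply (rule exI[of _ N], rule exI[of _ "\<lambda>i. (\<sigma> i, c0)"])
          using s ps c0 by (simp add: z_def prod_ifs_def max_dist_def yS)
        then obtain w where "avg_shadowed max_dist (\<Lambda> \<times> \<Gamma>) (prod_ifs f g) \<epsilon> z w" using H by blast
        then obtain \<tau> where t: "\<forall>i. \<tau> i \<in> \<Lambda> \<times> \<Gamma>" and
          ls: "limsup (\<lambda>n. ereal ((1 / real n) * (\<Sum>i<n. max_dist (ifs_comp (prod_ifs f g) \<tau> i w) (z i))))
                < ereal \<epsilon>"
          unfolding avg_shadowed_def by blast
        have "limsup (\<lambda>n. ereal ((1 / real n) * (\<Sum>i<n. dist (ifs_comp f (fst \<circ> \<tau>) i (fst w)) (x i))))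
             \<le> limsup (\<lambda>n. ereal ((1 / real n) * (\<Sum>i<n. max_dist (ifs_comp (prod_ifs f g) \<tau> i w) (z i))))"
          apply (rule limsup_le_avg)
          using max_dist_fst[of "ifs_comp (prod_ifs f g) \<tau> _ w" "z _"]
          by (metis fst_conv ifs_comp_prod prod.collapse z_def)
        with ls t show "\<exists>w. avg_shadowed dist \<Lambda> f \<epsilon> x w"
          unfolding avg_shadowed_def
          by (intro exI[of _ "fst w"] exI[of _ "fst \<circ> \<tau>"]) (auto simp: mem_Times_iff)
      qed
    qed
    show "average_shadowing dist \<Gamma> g"
      unfolding average_shadowing_def
    proof (intro allI impI)
      fix \<epsilon> :: real assume "\<epsilon> > 0"
      then obtain \<delta> where d: "\<delta> > 0" and H: "\<And>z. avg_pseudo_orbit max_dist (\<Lambda> \<times> \<Gamma>) (prod_ifs f g) \<delta> z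
          \<Longrightarrow> \<exists>w. avg_shadowed max_dist (\<Lambda> \<times> \<Gamma>) (prod_ifs f g) \<epsilon> z w"
        using P unfolding average_shadowing_def by blast
      show "\<exists>\<delta>>0. \<forall>z. avg_pseudo_orbit dist \<Gamma> g \<delta> z \<longrightarrow> (\<exists>w. avg_shadowed dist \<Gamma> g \<epsilon> z w)"
      proof (intro exI[of _ \<delta>] conjI allI impI d)
        fix y assume "avg_pseudo_orbit dist \<Gamma> g \<delta> y"
        then obtain N \<sigma> where s: "\<forall>i. \<sigma> i \<in> \<Gamma>"
          and ps: "\<forall>n\<ge>N. (1 / real n) * (\<Sum>i<n. dist (g (\<sigma> i) (y i)) (y (Suc i))) < \<delta>"
          unfolding avg_pseudo_orbit_def by blast
        define x where "x i = ifs_comp f (\<lambda>_. l0) i undefined" for i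
        define z where "z i = (x i, y i)" for i
        have xS: "f l0 (x i) = x (Suc i)" for i by (simp add: x_def)
        have "avg_pseudo_orbit max_dist (\<Lambda> \<times> \<Gamma>) (prod_ifs f g) \<delta> z"
          unfolding avg_pseudo_orbit_def
          apply (rule exI[of _ N], rule exI[of _ "\<lambda>i. (l0, \<sigma> i)"])
          using s ps l0 by (simp add: z_def prod_ifs_def max_dist_def xS)
        then obtain w where "avg_shadowed max_dist (\<Lambda> \<times> \<Gamma>) (prod_ifs f g) \<epsilon> z w" using H by blast
        then obtain \<tau> where t: "\<forall>i. \<tau> i \<in> \<Lambda> \<times> \<Gamma>" and
          ls: "limsup (\<lambda>n. ereal ((1 / real n) * (\<Sum>i<n. max_dist (ifs_comp (prod_ifs f g) \<tau> i w) (z i))))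
                < ereal \<epsilon>"
          unfolding avg_shadowed_def by blast
        have "limsup (\<lambda>n. ereal ((1 / real n) * (\<Sum>i<n. dist (ifs_comp g (snd \<circ> \<tau>) i (snd w)) (y i))))
             \<le> limsup (\<lambda>n. ereal ((1 / real n) * (\<Sum>i<n. max_dist (ifs_comp (prod_ifs f g) \<tau> i w) (z i))))"
          apply (rule limsup_le_avg)
          using max_dist_snd[of "ifs_comp (prod_ifs f g) \<tau> _ w" "z _"]
          by (metis snd_conv ifs_comp_prod prod.collapse z_def)
        with ls t show "\<exists>w. avg_shadowed dist \<Gamma> g \<epsilon> y w"
          unfolding avg_shadowed_def
          by (intro exI[of _ "snd w"] exI[of _ "snd \<circ> \<tau>"]) (auto simp: mem_Times_iff)
      qed
    qed
  qed
next
  assume "average_shadowing dist \<Lambda> f \<and> average_shadowing dist \<Gamma> g"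
  then have F: "average_shadowing dist \<Lambda> f" and G: "average_shadowing dist \<Gamma> g" by auto
  show "average_shadowing max_dist (\<Lambda> \<times> \<Gamma>) (prod_ifs f g)"
    unfolding average_shadowing_def
  proof (intro allI impI)
    fix \<epsilon> :: real assume e: "\<epsilon> > 0"
    then have e2: "\<epsilon>/2 > 0" by simp
    obtain \<delta>1 where d1: "\<delta>1 > 0" and H1: "\<And>z. avg_pseudo_orbit dist \<Lambda> f \<delta>1 z
          \<Longrightarrow> \<exists>w. avg_shadowed dist \<Lambda> f (\<epsilon>/2) z w"
      using F e2 unfolding average_shadowing_def by blast
    obtain \<delta>2 where d2: "\<delta>2 > 0" and H2: "\<And>z. avg_pseudo_orbit dist \<Gamma> g \<delta>2 z
          \<Longrightarrow> \<exists>w. avg_shadowed dist \<Gamma> g (\<epsilon>/2) z w"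
      using G e2 unfolding average_shadowing_def by blast
    show "\<exists>\<delta>>0. \<forall>z. avg_pseudo_orbit max_dist (\<Lambda> \<times> \<Gamma>) (prod_ifs f g) \<delta> z \<longrightarrow>
        (\<exists>w. avg_shadowed max_dist (\<Lambda> \<times> \<Gamma>) (prod_ifs f g) \<epsilon> z w)"
    proof (intro exI[of _ "min \<delta>1 \<delta>2"] conjI allI impI)
      show "min \<delta>1 \<delta>2 > 0" using d1 d2 by simp
      fix z assume "avg_pseudo_orbit max_dist (\<Lambda> \<times> \<Gamma>) (prod_ifs f g) (min \<delta>1 \<delta>2) z"
      then obtain N \<sigma> where s: "\<forall>i. \<sigma> i \<in> \<Lambda> \<times> \<Gamma>"
        and ps: "\<forall>n\<ge>N. (1 / real n) * (\<Sum>i<n. max_dist (prod_ifs f g (\<sigma> i) (z i)) (z (Suc i))) < min \<delta>1 \<delta>2"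
        unfolding avg_pseudo_orbit_def by blast
      have "avg_pseudo_orbit dist \<Lambda> f \<delta>1 (fst \<circ> z)"
        unfolding avg_pseudo_orbit_def
      proof (intro exI[of _ N] exI[of _ "fst \<circ> \<sigma>"] conjI allI impI)
        show "(fst \<circ> \<sigma>) i \<in> \<Lambda>" for i using s by (auto simp: mem_Times_iff)
        fix n assume "n \<ge> N"
        have "(1 / real n) * (\<Sum>i<n. dist (f ((fst \<circ> \<sigma>) i) ((fst \<circ> z) i)) ((fst \<circ> z) (Suc i)))
            \<le> (1 / real n) * (\<Sum>i<n. max_dist (prod_ifs f g (\<sigma> i) (z i)) (z (Suc i)))"
          by (rule avg_le) (simp add: max_dist_def prod_ifs_def)
        also have "\<dots> < \<delta>1" using ps \<open>n \<ge> N\<close> by fastforce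
        finally show "(1 / real n) * (\<Sum>i<n. dist (f ((fst \<circ> \<sigma>) i) ((fst \<circ> z) i)) ((fst \<circ> z) (Suc i))) < \<delta>1" .
      qed
      then obtain wx where "avg_shadowed dist \<Lambda> f (\<epsilon>/2) (fst \<circ> z) wx" using H1 by blast
      then obtain \<tau>1 where t1: "\<forall>i. \<tau>1 i \<in> \<Lambda>" and
        l1: "limsup (\<lambda>n. ereal ((1 / real n) * (\<Sum>i<n. dist (ifs_comp f \<tau>1 i wx) ((fst \<circ> z) i)))) < ereal (\<epsilon>/2)"
        unfolding avg_shadowed_def by blast
      have "avg_pseudo_orbit dist \<Gamma> g \<delta>2 (snd \<circ> z)"
        unfolding avg_pseudo_orbit_def
      proof (intro exI[of _ N] exI[of _ "snd \<circ> \<sigma>"] conjI allI impI)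
        show "(snd \<circ> \<sigma>) i \<in> \<Gamma>" for i using s by (auto simp: mem_Times_iff)
        fix n assume "n \<ge> N"
        have "(1 / real n) * (\<Sum>i<n. dist (g ((snd \<circ> \<sigma>) i) ((snd \<circ> z) i)) ((snd \<circ> z) (Suc i)))
            \<le> (1 / real n) * (\<Sum>i<n. max_dist (prod_ifs f g (\<sigma> i) (z i)) (z (Suc i)))"
          by (rule avg_le) (simp add: max_dist_def prod_ifs_def)
        also have "\<dots> < \<delta>2" using ps \<open>n \<ge> N\<close> by fastforce
        finally show "(1 / real n) * (\<Sum>i<n. dist (g ((snd \<circ> \<sigma>) i) ((snd \<circ> z) i)) ((snd \<circ> z) (Suc i))) < \<delta>2" .
      qed
      then obtain wy where "avg_shadowed dist \<Gamma> g (\<epsilon>/2) (snd \<circ> z) wy" using H2 by blast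
      then obtain \<tau>2 where t2: "\<forall>i. \<tau>2 i \<in> \<Gamma>" and
        l2: "limsup (\<lambda>n. ereal ((1 / real n) * (\<Sum>i<n. dist (ifs_comp g \<tau>2 i wy) ((snd \<circ> z) i)))) < ereal (\<epsilon>/2)"
        unfolding avg_shadowed_def by blast
      define \<tau> where "\<tau> i = (\<tau>1 i, \<tau>2 i)" for i
      have fst\<tau>: "fst \<circ> \<tau> = \<tau>1" and snd\<tau>: "snd \<circ> \<tau> = \<tau>2" by (auto simp: \<tau>_def)
      let ?a = "\<lambda>n. ereal ((1 / real n) * (\<Sum>i<n. dist (ifs_comp f \<tau>1 i wx) ((fst \<circ> z) i)))"
      let ?b = "\<lambda>n. ereal ((1 / real n) * (\<Sum>i<n. dist (ifs_comp g \<tau>2 i wy) ((snd \<circ> z) i)))"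
      have "limsup (\<lambda>n. ereal ((1 / real n) * (\<Sum>i<n. max_dist (ifs_comp (prod_ifs f g) \<tau> i (wx, wy)) (z i))))
          \<le> limsup (\<lambda>n. ?a n + ?b n)"
      proof (rule Limsup_mono, rule always_eventually, rule allI)
        fix n
        have "(1 / real n) * (\<Sum>i<n. max_dist (ifs_comp (prod_ifs f g) \<tau> i (wx, wy)) (z i))
           \<le> (1 / real n) * (\<Sum>i<n. dist (ifs_comp f \<tau>1 i wx) ((fst \<circ> z) i) + dist (ifs_comp g \<tau>2 i wy) ((snd \<circ> z) i))"
          by (rule avg_le) (metis comp_apply fst\<tau> snd\<tau> ifs_comp_prod fst_conv snd_conv max_dist_le_sum)
        also have "\<dots> = (1 / real n) * (\<Sum>i<n. dist (ifs_comp f \<tau>1 i wx) ((fst \<circ> z) i))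
            + (1 / real n) * (\<Sum>i<n. dist (ifs_comp g \<tau>2 i wy) ((snd \<circ> z) i))"
          by (simp add: sum.distrib distrib_left)
        finally show "ereal ((1 / real n) * (\<Sum>i<n. max_dist (ifs_comp (prod_ifs f g) \<tau> i (wx, wy)) (z i)))
            \<le> ?a n + ?b n" by simp
      qed
      also have "\<dots> \<le> limsup ?a + limsup ?b" by (rule ereal_limsup_add_mono)
      also have "\<dots> < ereal (\<epsilon>/2 + \<epsilon>/2)" by (rule ereal_lt_add[OF l1 l2])
      finally have "limsup (\<lambda>n. ereal ((1 / real n) * (\<Sum>i<n. max_dist (ifs_comp (prod_ifs f g) \<tau> i (wx, wy)) (z i))))
          < ereal \<epsilon>" by simp
      then show "\<exists>w. avg_shadowed max_dist (\<Lambda> \<times> \<Gamma>) (prod_ifs f g) \<epsilon> z w"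
        unfolding avg_shadowed_def using t1 t2
        by (intro exI[of _ "(wx, wy)"] exI[of _ \<tau>]) (auto simp: \<tau>_def)
    qed
  qed
qed

end
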